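(* Let $n\ge1$ and let $z_1,\dots,z_n$ be indeterminates. For all integers $m,k\ge0$, \[ \mathrm{monomial}_2(m,k,n)=e_m e_{m+k}+\sum_{i=1}^{m}(-1)^i\,\frac{k+2i}{i}\binom{k+i-1}{i-1}\,e_{m-i}\,e_{m+k+i}. \]
   Context: $e_r$ is the elementary symmetric polynomial of degree $r$ in $z_1,\dots,z_n$, with $e_0=1$ and $e_r=0$ for $r>n$. For integers $m_2,m_1\ge0$, $\mathrm{monomial}_2(m_2,m_1,n)$ is the monomial symmetric polynomial $\sum z^\alpha$ over all exponent vectors $\alpha\in\{0,1,2\}^n$ having exactly $m_2$ entries equal to $2$ and exactly $m_1$ entries equal to $1$. *)

theory Defs
  imports Main "HOL-Library.FuncSet"
begin

text \<open>Elementary symmetric polynomial of degree r in z_1..z_n, evaluated at z.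
  Empty sum for r > n, so e_r = 0 there; e_0 = 1.\<close>
definition esym :: "nat \<Rightarrow> nat \<Rightarrow> (nat \<Rightarrow> 'a::comm_ring_1) \<Rightarrow> 'a" where
  "esym n r z = (\<Sum>S\<in>{S. S \<subseteq> {1..n} \<and> card S = r}. \<Prod>i\<in>S. z i)"

definition monomial2 :: "nat \<Rightarrow> nat \<Rightarrow> nat \<Rightarrow> (nat \<Rightarrow> 'a::comm_ring_1) \<Rightarrow> 'a" where
  "monomial2 m2 m1 n z =
     (\<Sum>\<alpha>\<in>{\<alpha>. \<alpha> \<in> {1..n} \<rightarrow>\<^sub>E {0,1,2::nat}
              \<and> card {i\<in>{1..n}. \<alpha> i = 2} = m2 \<and> card {i\<in>{1..n}. \<alpha> i = 1} = m1}.
        \<Prod>i\<in>{1..n}. z i ^ \<alpha> i)"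

end

theory Submission imports Defs begin

definition EE :: "nat set \<Rightarrow> nat \<Rightarrow> (nat \<Rightarrow> 'a::comm_ring_1) \<Rightarrow> 'a" where
  "EE A r z = (\<Sum>S\<in>{S. S \<subseteq> A \<and> card S = r}. \<Prod>i\<in>S. z i)"

definition MM :: "nat set \<Rightarrow> nat \<Rightarrow> nat \<Rightarrow> (nat \<Rightarrow> 'a::comm_ring_1) \<Rightarrow> 'a" where
  "MM A a b z = (\<Sum>\<alpha>\<in>{\<alpha>. \<alpha> \<in> A \<rightarrow>\<^sub>E {0,1,2::nat}
              \<and> card {i\<in>A. \<alpha> i = 2} = a \<and> card {i\<in>A. \<alpha> i = 1} = b}.
        \<Prod>i\<in>A. z i ^ \<alpha> i)"

lemma EE_empty: "EE {} r z = (if r = 0 then 1 else 0)"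
proof -
  have "{S. S \<subseteq> ({}::nat set) \<and> card S = r} = (if r = 0 then {{}} else {})" by auto
  then show ?thesis unfolding EE_def by simp
qed

lemma EE_insert:
  assumes "finite A" "x \<notin> A"
  shows "EE (insert x A) r z = EE A r z + (if r = 0 then 0 else z x * EE A (r - 1) z)"
proof (cases r)
  case 0
  have "{S. S \<subseteq> insert x A \<and> card S = 0} = {{}}"
    using assms by (auto dest: finite_subset)
  moreover have "{S. S \<subseteq> A \<and> card S = 0} = {{}}"
    using assms by (auto dest: finite_subset)
  ultimately show ?thesis using 0 unfolding EE_def by simp
next
  case (Suc r')
  have eq: "{S. S \<subseteq> insert x A \<and> card S = Suc r'} =
     {S. S \<subseteq> A \<and> card S = Suc r'} \<union> insert x ` {S. S \<subseteq> A \<and> card S = r'}"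
  proof (intro equalityI subsetI)
    fix S assume S: "S \<in> {S. S \<subseteq> insert x A \<and> card S = Suc r'}"
    show "S \<in> {S. S \<subseteq> A \<and> card S = Suc r'} \<union> insert x ` {S. S \<subseteq> A \<and> card S = r'}"
    proof (cases "x \<in> S")
      case True
      have "finite S" using S assms by (auto dest: finite_subset)
      then have "S = insert x (S - {x})" "card (S - {x}) = r'" using True S by auto
      moreover have "S - {x} \<subseteq> A" using S by auto
      ultimately show ?thesis by blast
    next
      case False then show ?thesis using S by auto
    qed
  next
    fix S assume "S \<in> {S. S \<subseteq> A \<and> card S = Suc r'} \<union> insert x ` {S. S \<subseteq> A \<and> card S = r'}"
    then show "S \<in> {S. S \<subseteq> insert x A \<and> card S = Suc r'}"
      using assms by (auto dest: finite_subset simp: card_insert_if)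
      (meson card_insert_disjoint finite_subset subset_iff)
  qed
  have fin1: "finite {S. S \<subseteq> A \<and> card S = Suc r'}" using assms by simp
  have fin2: "finite {S. S \<subseteq> A \<and> card S = r'}" using assms by simp
  have disj: "{S. S \<subseteq> A \<and> card S = Suc r'} \<inter> insert x ` {S. S \<subseteq> A \<and> card S = r'} = {}"
    using assms by auto
  have inj: "inj_on (insert x) {S. S \<subseteq> A \<and> card S = r'}"
    using assms unfolding inj_on_def by (metis (mono_tags, lifting) insert_ident mem_Collect_eq subset_iff)
  have "EE (insert x A) r z = EE A r z + (\<Sum>S\<in>insert x ` {S. S \<subseteq> A \<and> card S = r'}. \<Prod>i\<in>S. z i)"
    unfolding EE_def Suc eq by (rule sum.union_disjoint) (use fin1 fin2 disj in auto)
  also have "(\<Sum>S\<in>insert x ` {S. S \<subseteq> A \<and> card S = r'}. \<Prod>i\<in>S. z i)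
      = (\<Sum>S\<in>{S. S \<subseteq> A \<and> card S = r'}. \<Prod>i\<in>insert x S. z i)"
    by (rule sum.reindex[OF inj, unfolded comp_def])
  also have "\<dots> = (\<Sum>S\<in>{S. S \<subseteq> A \<and> card S = r'}. z x * (\<Prod>i\<in>S. z i))"
    by (rule sum.cong) (use assms in \<open>auto intro!: prod.insert dest: finite_subset\<close>)
  also have "\<dots> = z x * EE A r' z" unfolding EE_def by (simp add: sum_distrib_left)
  finally show ?thesis using Suc by simp
qed

lemma MM_alt: "finite A \<Longrightarrow> MM A a b z = (\<Sum>\<alpha>\<in>A \<rightarrow>\<^sub>E {0,1,2::nat}.
   if card {i\<in>A. \<alpha> i = 2} = a \<and> card {i\<in>A. \<alpha> i = 1} = b then \<Prod>i\<in>A. z i ^ \<alpha> i else 0)"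
  unfolding MM_def by (subst sum.inter_filter[symmetric]) (auto intro: finite_PiE)

lemma MM_empty: "MM {} a b z = (if a = 0 \<and> b = 0 then 1 else 0)"
  by (simp add: MM_alt)

lemma MM_insert:
  assumes "finite A" "x \<notin> A"
  shows "MM (insert x A) a b z = MM A a b z + (if b = 0 then 0 else z x * MM A a (b - 1) z)
     + (if a = 0 then 0 else z x ^ 2 * MM A (a - 1) b z)"
proof -
  define F where "F = (\<lambda>\<alpha>. if card {i\<in>insert x A. \<alpha> i = (2::nat)} = a \<and> card {i\<in>insert x A. \<alpha> i = 1} = b
     then \<Prod>i\<in>insert x A. z i ^ \<alpha> i else 0)"
  define c2 where "c2 = (\<lambda>g. card {i\<in>A. g i = (2::nat)})"
  define c1 where "c1 = (\<lambda>g. card {i\<in>A. g i = (1::nat)})"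
  define pr where "pr = (\<lambda>g. \<Prod>i\<in>A. z i ^ g i)"
  have cnt: "card {i\<in>insert x A. (g(x:=y)) i = v} = card {i\<in>A. g i = v} + (if y = v then 1 else 0)"
    for g :: "nat \<Rightarrow> nat" and y v
  proof -
    have "{i\<in>insert x A. (g(x:=y)) i = v} = (if y = v then insert x {i\<in>A. g i = v} else {i\<in>A. g i = v})"
      using assms by auto
    then show ?thesis using assms by simp
  qed
  have prd: "(\<Prod>i\<in>insert x A. z i ^ (g(x:=y)) i) = z x ^ y * pr g" for g :: "nat \<Rightarrow> nat" and y
  proof -
    have "(\<Prod>i\<in>insert x A. z i ^ (g(x:=y)) i) = z x ^ y * (\<Prod>i\<in>A. z i ^ (g(x:=y)) i)"
      using assms by simp
    also have "(\<Prod>i\<in>A. z i ^ (g(x:=y)) i) = pr g" unfolding pr_def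
      by (rule prod.cong) (use assms in auto)
    finally show ?thesis .
  qed
  have "MM (insert x A) a b z = sum F ((\<lambda>(y, g). g(x := y)) ` ({0,1,2} \<times> (A \<rightarrow>\<^sub>E {0,1,2})))"
    unfolding MM_alt[OF finite_insert[THEN iffD2, OF assms(1)]] F_def PiE_insert_eq by simp
  also have "\<dots> = (\<Sum>(y,g)\<in>{0,1,2} \<times> (A \<rightarrow>\<^sub>E {0,1,2}). F (g(x:=y)))"
    by (subst sum.reindex) (use inj_combinator[OF assms(2), of "\<lambda>_. {0,1,2::nat}"] in \<open>auto simp: case_prod_unfold\<close>)
  also have "\<dots> = (\<Sum>y\<in>{0,1,2}. \<Sum>g\<in>A \<rightarrow>\<^sub>E {0,1,2}. F (g(x:=y)))"
    by (subst sum.cartesian_product) simp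
  also have "\<dots> = (\<Sum>g\<in>A \<rightarrow>\<^sub>E {0,1,2}. F (g(x:=0))) + (\<Sum>g\<in>A \<rightarrow>\<^sub>E {0,1,2}. F (g(x:=1)))
     + (\<Sum>g\<in>A \<rightarrow>\<^sub>E {0,1,2}. F (g(x:=2)))"
    by simp
  also have "(\<Sum>g\<in>A \<rightarrow>\<^sub>E {0,1,2}. F (g(x:=0))) = MM A a b z"
    unfolding MM_alt[OF assms(1)] F_def cnt prd pr_def by (auto intro!: sum.cong)
  also have "(\<Sum>g\<in>A \<rightarrow>\<^sub>E {0,1,2}. F (g(x:=1))) = (if b = 0 then 0 else z x * MM A a (b - 1) z)"
    unfolding MM_alt[OF assms(1)] F_def cnt prd pr_def
    by (auto simp: sum_distrib_left intro!: sum.cong)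
  also have "(\<Sum>g\<in>A \<rightarrow>\<^sub>E {0,1,2}. F (g(x:=2))) = (if a = 0 then 0 else z x ^ 2 * MM A (a - 1) b z)"
    unfolding MM_alt[OF assms(1)] F_def cnt prd pr_def
    by (auto simp: sum_distrib_left intro!: sum.cong)
  finally show ?thesis .
qed

definition cc :: "nat \<Rightarrow> nat \<Rightarrow> 'a::comm_ring_1" where
  "cc k i = (if i = 0 then 1 else (-1) ^ i * (of_nat (k + i choose i) + of_nat (k + i - 1 choose (i - 1))))"

lemma cc_step: "cc (Suc k) i + cc (Suc k) (Suc i) = (cc k (Suc i) :: 'a::comm_ring_1)"
proof (cases i)
  case 0
  then show ?thesis by (simp add: cc_def algebra_simps)
next
  case (Suc j)
  have nat: "(k + j + 3 choose (j + 2)) = (k + j + 2 choose (j + 2)) + (k + j + 1 choose (j + 1)) + (k + j + 1 choose j)"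
    by (simp add: numeral_3_eq_3 numeral_2_eq_2)
  have "cc (Suc k) i + cc (Suc k) (Suc i) = ((-1) ^ j * (of_nat (k + j + 3 choose (j + 2)) - of_nat (k + j + 1 choose j)) :: 'a)"
    using Suc by (simp add: cc_def algebra_simps numeral_3_eq_3 numeral_2_eq_2)
  also have "\<dots> = (-1) ^ j * (of_nat (k + j + 2 choose (j + 2)) + of_nat (k + j + 1 choose (j + 1)))"
    unfolding nat by simp
  also have "\<dots> = cc k (Suc i)"
    using Suc by (simp add: cc_def algebra_simps numeral_3_eq_3 numeral_2_eq_2)
  finally show ?thesis .
qed

lemma cc_0[simp]: "cc k 0 = 1" by (simp add: cc_def)

lemma cc_zero: "cc 0 i + cc 0 (Suc i) = (if i = 0 then -1 else (0::'a::comm_ring_1))"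
  by (cases i) (auto simp: cc_def)

definition RR :: "nat set \<Rightarrow> nat \<Rightarrow> nat \<Rightarrow> (nat \<Rightarrow> 'a::comm_ring_1) \<Rightarrow> 'a" where
  "RR A m k z = (\<Sum>i=0..m. cc k i * EE A (m - i) z * EE A (m + k + i) z)"

lemma W_lemma:
  fixes e :: "nat \<Rightarrow> 'a::comm_ring_1"
  shows "(\<Sum>i=0..m. cc k i * (if m - i = 0 then 0 else e (m - i - 1)) * (if m + k + i = 0 then 0 else e (m + k + i - 1)))
    = (if m = 0 then 0 else (\<Sum>i=0..m-1. cc k i * e (m - 1 - i) * e (m - 1 + k + i)))"
proof (cases m)
  case 0 then show ?thesis by simp
next
  case (Suc m')
  have "(\<Sum>i=0..m. cc k i * (if m - i = 0 then 0 else e (m - i - 1)) * (if m + k + i = 0 then 0 else e (m + k + i - 1)))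
     = (\<Sum>i=0..m'. cc k i * (if m - i = 0 then 0 else e (m - i - 1)) * (if m + k + i = 0 then 0 else e (m + k + i - 1)))"
    using Suc by simp
  also have "\<dots> = (\<Sum>i=0..m'. cc k i * e (m' - i) * e (m' + k + i))"
    by (rule sum.cong) (use Suc in \<open>auto simp: Suc_diff_le\<close>)
  finally show ?thesis using Suc by simp
qed

lemma Z_lemma:
  fixes e :: "nat \<Rightarrow> 'a::comm_ring_1"
  shows "(\<Sum>i=0..m. cc k i * ((if m - i = 0 then 0 else e (m - i - 1)) * e (m + k + i)
        + e (m - i) * (if m + k + i = 0 then 0 else e (m + k + i - 1))))
    = (if k = 0 then 0 else (\<Sum>i=0..m. cc (k - 1) i * e (m - i) * e (m + (k - 1) + i)))"
proof (cases m)
  case 0 then show ?thesis by (simp add: cc_def)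
next
  case (Suc m')
  define f where "f i = e (m' - i) * e (m' + k + 1 + i)" for i
  have S1: "(\<Sum>i=0..m. cc k i * (if m - i = 0 then 0 else e (m - i - 1)) * e (m + k + i))
      = (\<Sum>i=0..m'. cc k i * f i)"
  proof -
    have "(\<Sum>i=0..m. cc k i * (if m - i = 0 then 0 else e (m - i - 1)) * e (m + k + i))
      = (\<Sum>i=0..m'. cc k i * (if m - i = 0 then 0 else e (m - i - 1)) * e (m + k + i))"
      using Suc by simp
    also have "\<dots> = (\<Sum>i=0..m'. cc k i * f i)"
      by (rule sum.cong) (use Suc in \<open>auto simp: Suc_diff_le f_def\<close>)
    finally show ?thesis .
  qed
  have S2: "(\<Sum>i=0..m. cc k i * (e (m - i) * (if m + k + i = 0 then 0 else e (m + k + i - 1))))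
     = e m * e (m' + k) + (\<Sum>i=0..m'. cc k (Suc i) * f i)"
    unfolding Suc sum.atLeast0_atMost_Suc_shift by (simp add: cc_def f_def mult.assoc)
  have Z: "(\<Sum>i=0..m. cc k i * ((if m - i = 0 then 0 else e (m - i - 1)) * e (m + k + i)
        + e (m - i) * (if m + k + i = 0 then 0 else e (m + k + i - 1))))
      = e m * e (m' + k) + (\<Sum>i=0..m'. (cc k i + cc k (Suc i)) * f i)"
    using S1 S2 by (simp add: distrib_left distrib_right sum.distrib mult.assoc)
  show ?thesis
  proof (cases k)
    case 0
    have "(\<Sum>i=0..m'. (cc 0 i + cc 0 (Suc i)) * f i) = (\<Sum>i=0..m'. if i = 0 then - f 0 else (0::'a))"
      by (rule sum.cong) (auto simp: cc_zero)
    also have "\<dots> = - f 0" by (simp add: sum.delta)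
    finally show ?thesis using Z 0 Suc by (simp add: f_def mult.commute)
  next
    case (Suc k')
    have "(\<Sum>i=0..m. cc (k - 1) i * e (m - i) * e (m + (k - 1) + i))
       = e m * e (m' + k) + (\<Sum>i=0..m'. cc k' (Suc i) * f i)"
      unfolding \<open>m = Suc m'\<close> sum.atLeast0_atMost_Suc_shift using Suc by (simp add: f_def mult.assoc)
    then show ?thesis using Z Suc by (simp add: cc_step)
  qed
qed

lemma term_expand:
  fixes c zx ea eb ea' eb' :: "'a::comm_ring_1"
  shows "c * (ea + zx * ea') * (eb + zx * eb') = c * ea * eb + zx * (c * (ea' * eb + ea * eb')) + zx^2 * (c * ea' * eb')"
  by (simp add: algebra_simps power2_eq_square)

lemma main:
  assumes "finite A"
  shows "MM A m k z = RR A m k z"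
  using assms
proof (induction A arbitrary: m k rule: finite_induct)
  case empty
  show ?case
    by (cases m) (auto simp: MM_empty RR_def EE_empty intro!: sum.neutral)
next
  case (insert x A)
  let ?e = "\<lambda>r. EE A r z"
  have E': "EE (insert x A) r z = ?e r + z x * (if r = 0 then 0 else ?e (r - 1))" for r
    using EE_insert[OF insert(1,2), of r z] by (simp split: if_split)
  have "RR (insert x A) m k z = (\<Sum>i=0..m. cc k i * ?e (m - i) * ?e (m + k + i)
     + z x * (cc k i * ((if m - i = 0 then 0 else ?e (m - i - 1)) * ?e (m + k + i)
        + ?e (m - i) * (if m + k + i = 0 then 0 else ?e (m + k + i - 1))))
     + (z x)^2 * (cc k i * (if m - i = 0 then 0 else ?e (m - i - 1)) * (if m + k + i = 0 then 0 else ?e (m + k + i - 1))))"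
    unfolding RR_def E' term_expand ..
  also have "\<dots> = RR A m k z + z x * (if k = 0 then 0 else RR A m (k - 1) z)
      + (z x)^2 * (if m = 0 then 0 else RR A (m - 1) k z)"
  proof -
    have w: "(\<Sum>i=0..m. cc k i * (if m - i = 0 then 0 else ?e (m - i - 1)) * (if m + k + i = 0 then 0 else ?e (m + k + i - 1)))
      = (if m = 0 then 0 else RR A (m - 1) k z)"
      using W_lemma[where m=m and k=k and e="\<lambda>r. EE A r z"] unfolding RR_def by simp
    have zz: "(\<Sum>i=0..m. cc k i * ((if m - i = 0 then 0 else ?e (m - i - 1)) * ?e (m + k + i)
        + ?e (m - i) * (if m + k + i = 0 then 0 else ?e (m + k + i - 1))))
      = (if k = 0 then 0 else RR A m (k - 1) z)"
      using Z_lemma[where m=m and k=k and e="\<lambda>r. EE A r z"] unfolding RR_def by simp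
    show ?thesis
      unfolding sum.distrib sum_distrib_left[symmetric] w zz by (simp add: RR_def)
  qed
  also have "\<dots> = MM (insert x A) m k z"
    unfolding MM_insert[OF insert(1,2)] insert.IH by simp
  finally show ?case ..
qed

lemma cc_formula:
  assumes "i \<ge> 1"
  shows "(cc k i :: 'a::field_char_0) = (-1) ^ i * (of_nat (k + 2 * i) / of_nat i) * of_nat ((k + i - 1) choose (i - 1))"
proof -
  obtain j where j: "i = Suc j" using assms by (cases i) auto
  have bn: "Suc j * ((Suc (k + j) choose Suc j) + (k + j choose j)) = (k + 2 * Suc j) * (k + j choose j)"
    using Suc_times_binomial[of j "k + j"] by (simp add: algebra_simps)
  have b: "of_nat (Suc j) * ((of_nat (Suc (k + j) choose Suc j) :: 'a) + of_nat (k + j choose j))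
     = of_nat (k + 2 * Suc j) * of_nat (k + j choose j)"
    using arg_cong[OF bn, of "of_nat :: nat \<Rightarrow> 'a"] by (simp only: of_nat_mult of_nat_add)
  have nz: "(of_nat (Suc j) :: 'a) \<noteq> 0" by (simp only: of_nat_eq_0_iff)
  have "(of_nat (Suc (k + j) choose Suc j) :: 'a) + of_nat (k + j choose j)
      = of_nat (k + 2 * Suc j) / of_nat (Suc j) * of_nat (k + j choose j)"
    using b nz by (simp add: field_simps del: of_nat_Suc)
  then show ?thesis using j by (simp add: cc_def)
qed

theorem lemma3p3:
  fixes z :: "nat \<Rightarrow> 'a::field_char_0" and n m k :: nat
  assumes "n \<ge> 1"
  shows "monomial2 m k n z =
           esym n m z * esym n (m + k) z
           + (\<Sum>i=1..m. (-1) ^ i * (of_nat (k + 2 * i) / of_nat i)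
                 * of_nat ((k + i - 1) choose (i - 1))
                 * esym n (m - i) z * esym n (m + k + i) z)"
proof -
  have e: "esym n r z = EE {1..n} r z" for r unfolding esym_def EE_def ..
  have M: "monomial2 m k n z = MM {1..n} m k z" unfolding monomial2_def MM_def ..
  have "RR {1..n} m k z = cc k 0 * EE {1..n} m z * EE {1..n} (m + k) z
      + (\<Sum>i=1..m. cc k i * EE {1..n} (m - i) z * EE {1..n} (m + k + i) z)"
    unfolding RR_def by (subst sum.atLeast_Suc_atMost) simp_all
  also have "(\<Sum>i=1..m. cc k i * EE {1..n} (m - i) z * EE {1..n} (m + k + i) z)
     = (\<Sum>i=1..m. (-1) ^ i * (of_nat (k + 2 * i) / of_nat i)
                 * of_nat ((k + i - 1) choose (i - 1))
                 * esym n (m - i) z * esym n (m + k + i) z)"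
    by (rule sum.cong) (simp_all add: cc_formula e)
  finally show ?thesis using main[of "{1..n}" m k z] by (simp add: M e)
qed

end
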